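(* For all integers $d\ge2$ and $k\ge2$ there is an instance $H$ of the MAX-$k$-local Hamiltonian problem on qudits of dimension $d$, with optimal value $\mathrm{OPT}>0$, such that every product state assignment $\sigma=\sigma_1\otimes\cdots\otimes\sigma_n$ has value $\mathrm{Tr}(H\sigma)\le \mathrm{OPT}/d^{\lfloor k/2\rfloor}$. In particular, for $k=2$ the bound $\mathrm{OPT}/d^{k-1}$ achievable by product states is tight.
   Context: MAX-$k$-local Hamiltonian on $d$-level systems (qudits): an instance on $n$ qudits (Hilbert space $(\mathbb{C}^d)^{\otimes n}$) consists of one Hermitian matrix $H_{i_1,\ldots,i_k}$ for each $k$-element subset $\{i_1,\ldots,i_k\}$ of the qudits; each $H_{i_1,\ldots,i_k}$ acts nontrivially only on those $k$ qudits, is positive semidefinite, and has operator norm at most $1$. Put $H=\sum H_{i_1,\ldots,i_k}$. An assignment is any state $\rho$ on the $n$ qudits, with value $\mathrm{Tr}(H\rho)$; $\mathrm{OPT}$ is the largest eigenvalue of $H$. *)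

theory Defs
  imports "Jordan_Normal_Form.Char_Poly" "HOL-Library.Cardinality"
begin

text \<open>n qudits of local dimension d: the Hilbert space (C^d)^{tensor n} is C^(d^n), with
  basis index i < d^n encoding the configuration whose q-th qudit (q < n) is digit d q i.\<close>

definition digit :: "nat \<Rightarrow> nat \<Rightarrow> nat \<Rightarrow> nat" where
  "digit d q i = (i div d ^ q) mod d"

definition mtrace :: "complex mat \<Rightarrow> complex" where
  "mtrace A = (\<Sum>i<dim_row A. A $$ (i, i))"

definition hermitian_mat :: "nat \<Rightarrow> complex mat \<Rightarrow> bool" where
  "hermitian_mat m A \<longleftrightarrow> A \<in> carrier_mat m m \<and>
     (\<forall>i<m. \<forall>j<m. A $$ (i, j) = cnj (A $$ (j, i)))"

definition psd_mat :: "nat \<Rightarrow> complex mat \<Rightarrow> bool" where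
  "psd_mat m A \<longleftrightarrow> hermitian_mat m A \<and>
     (\<forall>v \<in> carrier_vec m. 0 \<le> Re ((A *\<^sub>v v) \<bullet>c v))"

definition vnorm2 :: "complex vec \<Rightarrow> real" where
  "vnorm2 v = (\<Sum>i<dim_vec v. (cmod (v $ i))\<^sup>2)"

definition opnorm_le1 :: "nat \<Rightarrow> complex mat \<Rightarrow> bool" where
  "opnorm_le1 m A \<longleftrightarrow> (\<forall>v \<in> carrier_vec m. vnorm2 (A *\<^sub>v v) \<le> vnorm2 v)"

definition density_mat :: "nat \<Rightarrow> complex mat \<Rightarrow> bool" where
  "density_mat m A \<longleftrightarrow> psd_mat m A \<and> mtrace A = 1"

text \<open>index into C^(d^|S|) of the restriction of configuration i to the qudits in S
  (qudits of S taken in increasing order)\<close>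
definition local_index :: "nat \<Rightarrow> nat set \<Rightarrow> nat \<Rightarrow> nat" where
  "local_index d S i = (\<Sum>t<card S. digit d (sorted_list_of_set S ! t) i * d ^ t)"

text \<open>the operator h (on the qudits in S) tensored with the identity on the other qudits\<close>
definition embed_local :: "nat \<Rightarrow> nat \<Rightarrow> nat set \<Rightarrow> complex mat \<Rightarrow> complex mat" where
  "embed_local n d S h = mat (d ^ n) (d ^ n) (\<lambda>(i, j).
     if (\<forall>q<n. q \<notin> S \<longrightarrow> digit d q i = digit d q j)
     then h $$ (local_index d S i, local_index d S j) else 0)"

definition k_subsets :: "nat \<Rightarrow> nat \<Rightarrow> nat set set" where
  "k_subsets n k = {S. S \<subseteq> {..<n} \<and> card S = k}"

definition valid_instance :: "nat \<Rightarrow> nat \<Rightarrow> nat \<Rightarrow> (nat set \<Rightarrow> complex mat) \<Rightarrow> bool" where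
  "valid_instance n d k h \<longleftrightarrow> (\<forall>S \<in> k_subsets n k.
      psd_mat (d ^ k) (h S) \<and> opnorm_le1 (d ^ k) (h S))"

definition hamiltonian :: "nat \<Rightarrow> nat \<Rightarrow> nat \<Rightarrow> (nat set \<Rightarrow> complex mat) \<Rightarrow> complex mat" where
  "hamiltonian n d k h = mat (d ^ n) (d ^ n) (\<lambda>(i, j).
     \<Sum>S \<in> k_subsets n k. embed_local n d S (h S) $$ (i, j))"

definition product_state :: "nat \<Rightarrow> nat \<Rightarrow> (nat \<Rightarrow> complex mat) \<Rightarrow> complex mat" where
  "product_state n d \<sigma> = mat (d ^ n) (d ^ n) (\<lambda>(i, j).
     \<Prod>q<n. \<sigma> q $$ (digit d q i, digit d q j))"

definition is_largest_eigenvalue :: "complex mat \<Rightarrow> real \<Rightarrow> bool" where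
  "is_largest_eigenvalue A opt \<longleftrightarrow> eigenvalue A (complex_of_real opt) \<and>
     (\<forall>a. eigenvalue A a \<longrightarrow> Re a \<le> opt)"

end

theory Submission
  imports Defs
begin


lemma sum_split_lt:
  fixes F :: "nat \<Rightarrow> 'a::comm_monoid_add"
  shows "(\<Sum>i<D*M. F i) = (\<Sum>j<M. \<Sum>a<D. F (a + D*j))"
proof (induction M)
  case 0 then show ?case by simp
next
  case (Suc M)
  have "{..<D*Suc M} = {..<D*M} \<union> {D*M..<D*M+D}" by (auto simp: algebra_simps)
  then have "(\<Sum>i<D*Suc M. F i) = (\<Sum>i<D*M. F i) + (\<Sum>i\<in>{D*M..<D*M+D}. F i)"
    by (simp add: sum.union_disjoint ivl_disj_int)
  also have "(\<Sum>i\<in>{D*M..<D*M+D}. F i) = (\<Sum>a<D. F (a + D*M))"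
    using sum.shift_bounds_nat_ivl[of F 0 "D*M" D] by (simp add: atLeast0LessThan add.commute)
  finally show ?case using Suc by simp
qed

lemma digit_0: "a < D \<Longrightarrow> digit D 0 (a + D*j) = a"
  by (simp add: digit_def)

lemma digit_Suc: "a < D \<Longrightarrow> digit D (Suc t) (a + D*j) = digit D t j"
proof -
  assume a: "a < D"
  then have "(a + D*j) div D = j" by simp
  then show ?thesis by (simp add: digit_def power_Suc div_mult2_eq)
qed

lemma prod_digits:
  fixes g :: "nat \<Rightarrow> nat \<Rightarrow> 'a::comm_semiring_1"
  shows "(\<Sum>i<D^m. \<Prod>t<m. g t (digit D t i)) = (\<Prod>t<m. \<Sum>a<D. g t a)"
proof (induction m arbitrary: g)
  case 0 then show ?case by simp
next
  case (Suc m)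
  have "(\<Sum>i<D^Suc m. \<Prod>t<Suc m. g t (digit D t i))
     = (\<Sum>j<D^m. \<Sum>a<D. \<Prod>t<Suc m. g t (digit D t (a + D*j)))"
    by (simp add: sum_split_lt)
  also have "\<dots> = (\<Sum>j<D^m. \<Sum>a<D. g 0 a * (\<Prod>t<m. g (Suc t) (digit D t j)))"
    by (intro sum.cong refl) (simp only: prod.lessThan_Suc_shift digit_0 digit_Suc lessThan_iff)
  also have "\<dots> = (\<Sum>a<D. g 0 a) * (\<Sum>j<D^m. \<Prod>t<m. g (Suc t) (digit D t j))"
    by (simp add: sum_distrib_right sum_distrib_left)
  also have "\<dots> = (\<Sum>a<D. g 0 a) * (\<Prod>t<m. \<Sum>a<D. g (Suc t) a)"
    using Suc[of "\<lambda>t. g (Suc t)"] by simp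
  finally show ?case by (simp only: prod.lessThan_Suc_shift)
qed



lemma digit_even: "0 < d \<Longrightarrow> digit d (2*t) i = digit (d*d) t i mod d"
  by (simp add: digit_def power_mult power2_eq_square mod_mod_cancel)

lemma digit_odd: "0 < d \<Longrightarrow> digit d (Suc (2*t)) i = digit (d*d) t i div d"
proof -
  assume d: "0 < d"
  have "i div (d*d)^t mod (d*d) = d * (i div (d*d)^t div d mod d) + i div (d*d)^t mod d"
    by (rule mod_mult2_eq)
  then have "i div (d*d)^t mod (d*d) div d = i div (d*d)^t div d mod d"
    using d by simp
  moreover have "i div d div (d*d)^t = i div (d*d)^t div d"
    by (metis div_mult2_eq mult.commute)
  ultimately show ?thesis
    by (simp add: digit_def power_mult power2_eq_square div_mult2_eq power_Suc2)
qed

lemma digit_big: "0 < d \<Longrightarrow> i < d^m \<Longrightarrow> m \<le> q \<Longrightarrow> digit d q i = 0"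
proof -
  assume "0 < d" "i < d^m" "m \<le> q"
  then have "d^m \<le> d^q" by (simp add: power_increasing)
  with \<open>i < d^m\<close> show ?thesis by (simp add: digit_def)
qed

lemma prod_pairs:
  fixes f :: "nat \<Rightarrow> 'a::comm_monoid_mult"
  shows "(\<Prod>q<2*p. f q) = (\<Prod>t<p. f (2*t) * f (Suc (2*t)))"
  by (induction p) (simp_all add: mult_ac)

lemma digits_recon: "(\<Sum>t<k. digit d t i * d^t) = i mod d^k"
proof (induction k)
  case 0 then show ?case by simp
next
  case (Suc k)
  have "i mod (d^k * d) = d^k * (i div d^k mod d) + i mod d^k" by (rule mod_mult2_eq)
  then show ?case using Suc by (simp add: digit_def power_Suc2 mult.commute)
qed


lemma CS_real:
  fixes a b :: "nat \<Rightarrow> real"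
  shows "(\<Sum>i\<in>I. a i * b i)^2 \<le> (\<Sum>i\<in>I. (a i)^2) * (\<Sum>i\<in>I. (b i)^2)"
proof -
  let ?A = "\<Sum>i\<in>I. (a i)^2" and ?B = "\<Sum>i\<in>I. (b i)^2" and ?S = "\<Sum>i\<in>I. a i * b i"
  have "0 \<le> (\<Sum>i\<in>I. \<Sum>j\<in>I. (a i * b j - a j * b i)^2)"
    by (intro sum_nonneg) auto
  also have "\<dots> = (\<Sum>i\<in>I. \<Sum>j\<in>I. (a i)^2 * (b j)^2) + (\<Sum>i\<in>I. \<Sum>j\<in>I. (b i)^2 * (a j)^2)
      - 2 * (\<Sum>i\<in>I. \<Sum>j\<in>I. (a i * b i) * (a j * b j))"
    by (simp add: sum_subtractf sum.distrib sum_distrib_left power2_eq_square algebra_simps)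
  also have "\<dots> = ?A * ?B + ?B * ?A - 2 * (?S * ?S)"
    by (simp only: sum_product)
  finally show ?thesis by (simp add: power2_eq_square)
qed



lemma psd_diag_real: "psd_mat m A \<Longrightarrow> i < m \<Longrightarrow> Im (A $$ (i,i)) = 0"
proof -
  assume "psd_mat m A" "i < m"
  then have "A $$ (i,i) = cnj (A $$ (i,i))" unfolding psd_mat_def hermitian_mat_def by blast
  then have "Im (A $$ (i,i)) = - Im (A $$ (i,i))" by (metis cnj.simps(2))
  then show ?thesis by simp
qed

lemma qform2:
  fixes x y :: complex
  assumes A: "A \<in> carrier_mat m m" and ij: "i < m" "j < m" "i \<noteq> j"
  defines "v \<equiv> vec m (\<lambda>l. if l = i then x else if l = j then y else 0)"
  shows "(A *\<^sub>v v) \<bullet>c v = (A$$(i,i) * x + A$$(i,j) * y) * cnj x + (A$$(j,i) * x + A$$(j,j) * y) * cnj y"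
proof -
  have vv: "\<And>l. l < m \<Longrightarrow> v $ l = (if l = i then x else 0) + (if l = j then y else 0)"
    using ij by (simp add: v_def)
  have Av: "(A *\<^sub>v v) $ l = A$$(l,i) * x + A$$(l,j) * y" if l: "l < m" for l
  proof -
    have "(A *\<^sub>v v) $ l = (\<Sum>r\<in>{0..<m}. A$$(l,r) * v $ r)"
      using A l by (simp add: scalar_prod_def row_def v_def)
    also have "\<dots> = (\<Sum>r\<in>{0..<m}. (if r = i then A$$(l,r) * x else 0) + (if r = j then A$$(l,r) * y else 0))"
      using ij by (intro sum.cong refl) (auto simp: vv distrib_left)
    also have "\<dots> = A$$(l,i) * x + A$$(l,j) * y"
      using ij by (simp add: sum.distrib)
    finally show ?thesis .
  qed
  have "(A *\<^sub>v v) \<bullet>c v = (\<Sum>l\<in>{0..<m}. (A *\<^sub>v v) $ l * cnj (v $ l))"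
    by (simp add: scalar_prod_def v_def)
  also have "\<dots> = (\<Sum>l\<in>{0..<m}. (if l = i then (A *\<^sub>v v) $ l * cnj x else 0) + (if l = j then (A *\<^sub>v v) $ l * cnj y else 0))"
    using ij by (intro sum.cong refl) (auto simp: vv distrib_left)
  also have "\<dots> = (A *\<^sub>v v) $ i * cnj x + (A *\<^sub>v v) $ j * cnj y"
    using ij by (simp add: sum.distrib)
  finally show ?thesis using Av ij by simp
qed



lemma psd_diag_nonneg:
  assumes "psd_mat m A" "i < m"
  shows "0 \<le> Re (A $$ (i,i))"
proof -
  define v where "v = vec m (\<lambda>l. if l = i then (1::complex) else 0)"
  have A: "A \<in> carrier_mat m m" using assms unfolding psd_mat_def hermitian_mat_def by blast
  have vc: "v \<in> carrier_vec m" by (simp add: v_def)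
  have Av: "(A *\<^sub>v v) $ l = A$$(l,i)" if l: "l < m" for l
  proof -
    have "(A *\<^sub>v v) $ l = (\<Sum>r\<in>{0..<m}. A$$(l,r) * v $ r)"
      using A l by (simp add: scalar_prod_def row_def v_def)
    also have "\<dots> = (\<Sum>r\<in>{0..<m}. (if r = i then A$$(l,r) else 0))"
      by (intro sum.cong refl) (auto simp: v_def)
    also have "\<dots> = A$$(l,i)" using assms(2) by simp
    finally show ?thesis .
  qed
  have "(A *\<^sub>v v) \<bullet>c v = (\<Sum>l\<in>{0..<m}. (A *\<^sub>v v) $ l * cnj (v $ l))"
    by (simp add: scalar_prod_def v_def)
  also have "\<dots> = (\<Sum>l\<in>{0..<m}. (if l = i then (A *\<^sub>v v) $ l else 0))"
    by (intro sum.cong refl) (auto simp: v_def)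
  also have "\<dots> = A $$ (i,i)" using assms(2) Av by simp
  finally show ?thesis using assms(1) vc unfolding psd_mat_def by metis
qed

lemma psd_offdiag:
  assumes P: "psd_mat m A" and ij: "i < m" "j < m"
  shows "(cmod (A $$ (i,j)))^2 \<le> Re (A $$ (i,i)) * Re (A $$ (j,j))"
proof (cases "i = j")
  case True
  then show ?thesis using psd_diag_real[OF P ij(1)] cmod_power2[of "A$$(i,i)"] by (simp add: power2_eq_square)
next
  case False
  have A: "A \<in> carrier_mat m m" using P unfolding psd_mat_def hermitian_mat_def by blast
  have herm: "A $$ (j,i) = cnj (A $$ (i,j))" using P ij unfolding psd_mat_def hermitian_mat_def by blast
  define a where "a = A $$ (i,i)"
  define b where "b = A $$ (j,j)"
  define c where "c = A $$ (i,j)"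
  have ia: "Im a = 0" using psd_diag_real[OF P ij(1)] a_def by simp
  have ib: "Im b = 0" using psd_diag_real[OF P ij(2)] b_def by simp
  have rb: "0 \<le> Re b" using psd_diag_nonneg[OF P ij(2)] b_def by simp
  have cc: "cmod c * cmod c = Re c * Re c + Im c * Im c"
    using cmod_power2[of c] by (simp add: power2_eq_square)
  have Q: "0 \<le> Re ((a * x + c * y) * cnj x + (cnj c * x + b * y) * cnj y)" for x y
  proof -
    define v where "v = vec m (\<lambda>l. if l = i then x else if l = j then y else 0)"
    have "v \<in> carrier_vec m" by (simp add: v_def)
    then have "0 \<le> Re ((A *\<^sub>v v) \<bullet>c v)" using P unfolding psd_mat_def by blast
    then show ?thesis using qform2[OF A ij False, of x y] herm
      by (simp add: v_def a_def b_def c_def)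
  qed
  show ?thesis
  proof (cases "Re b > 0")
    case True
    have "0 \<le> Re ((a * Re b + c * (- cnj c)) * cnj (Re b) + (cnj c * Re b + b * (- cnj c)) * cnj (- cnj c))"
      using Q by blast
    also have "\<dots> = Re b * (Re a * Re b - (cmod c)^2)"
      using ia ib cc by (simp add: algebra_simps power2_eq_square)
    finally have "(cmod c)^2 \<le> Re a * Re b" using True
      by (simp add: zero_le_mult_iff)
    then show ?thesis by (simp add: a_def b_def c_def)
  next
    case False
    with rb have b0: "Re b = 0" by simp
    have "c = 0"
    proof (rule ccontr)
      assume c0: "c \<noteq> 0"
      define t where "t = (Re a + 1) / (2 * (cmod c)^2)"
      have "0 \<le> Re ((a * 1 + c * (- t * cnj c)) * cnj 1 + (cnj c * 1 + b * (- t * cnj c)) * cnj (- t * cnj c))"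
        using Q by blast
      also have "\<dots> = Re a - 2 * t * (cmod c)^2"
        using ia ib b0 cc by (simp add: algebra_simps power2_eq_square)
      also have "\<dots> = -1" using c0 by (simp add: t_def field_simps)
      finally show False by simp
    qed
    then show ?thesis
      using psd_diag_nonneg[OF P ij(1)] psd_diag_nonneg[OF P ij(2)] by (simp add: c_def)
  qed
qed



lemma density_trace: "density_mat m A \<Longrightarrow> (\<Sum>i<m. Re (A $$ (i,i))) = 1"
proof -
  assume D: "density_mat m A"
  then have "dim_row A = m" unfolding density_mat_def psd_mat_def hermitian_mat_def by auto
  with D have "(\<Sum>i<m. A $$ (i,i)) = 1" unfolding density_mat_def mtrace_def by simp
  then have "Re (\<Sum>i<m. A $$ (i,i)) = 1" by simp
  then show ?thesis by (simp add: Re_sum)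
qed

lemma density_diag_le1:
  assumes D: "density_mat m A" and i: "i < m"
  shows "cmod (A $$ (i,i)) \<le> 1"
proof -
  have P: "psd_mat m A" using D unfolding density_mat_def by simp
  have "cmod (A $$ (i,i)) = Re (A $$ (i,i))"
    using psd_diag_real[OF P i] psd_diag_nonneg[OF P i] by (simp add: cmod_eq_Re)
  also have "\<dots> \<le> (\<Sum>i<m. Re (A $$ (i,i)))"
    using psd_diag_nonneg[OF P] i by (intro member_le_sum) auto
  finally show ?thesis using density_trace[OF D] by simp
qed

lemma pair_bound:
  assumes S: "density_mat m \<sigma>" and T: "density_mat m \<tau>"
  shows "cmod (\<Sum>a<m. \<Sum>b<m. \<sigma> $$ (b,a) * \<tau> $$ (b,a)) \<le> 1"
proof -
  have PS: "psd_mat m \<sigma>" and PT: "psd_mat m \<tau>" using S T unfolding density_mat_def by auto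
  define x where "x i = Re (\<sigma> $$ (i,i))" for i
  define y where "y i = Re (\<tau> $$ (i,i))" for i
  have x0: "0 \<le> x i" if "i < m" for i using psd_diag_nonneg[OF PS that] x_def by simp
  have y0: "0 \<le> y i" if "i < m" for i using psd_diag_nonneg[OF PT that] y_def by simp
  have key: "cmod (\<sigma> $$ (b,a) * \<tau> $$ (b,a)) \<le> (x b * y a + x a * y b) / 2"
    if ab: "a < m" "b < m" for a b
  proof -
    have "(cmod (\<sigma> $$ (b,a) * \<tau> $$ (b,a)))^2 = (cmod (\<sigma> $$ (b,a)))^2 * (cmod (\<tau> $$ (b,a)))^2"
      by (simp add: norm_mult power_mult_distrib)
    also have "\<dots> \<le> (x b * x a) * (y b * y a)"
    proof (rule mult_mono)
      show "(cmod (\<sigma> $$ (b,a)))^2 \<le> x b * x a"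
        using psd_offdiag[OF PS ab(2) ab(1)] unfolding x_def .
      show "(cmod (\<tau> $$ (b,a)))^2 \<le> y b * y a"
        using psd_offdiag[OF PT ab(2) ab(1)] unfolding y_def .
      show "0 \<le> x b * x a" using x0 ab by simp
      show "0 \<le> (cmod (\<tau> $$ (b,a)))^2" by simp
    qed
    also have "\<dots> \<le> ((x b * y a + x a * y b) / 2)^2"
    proof -
      have "0 \<le> (x b * y a - x a * y b)^2" by simp
      then show ?thesis by (simp add: power2_eq_square algebra_simps divide_simps)
    qed
    finally have "(cmod (\<sigma> $$ (b,a) * \<tau> $$ (b,a)))^2 \<le> ((x b * y a + x a * y b) / 2)^2" .
    moreover have "0 \<le> (x b * y a + x a * y b) / 2" using x0 y0 ab by simp
    ultimately show ?thesis by (rule power2_le_imp_le)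
  qed
  have "cmod (\<Sum>a<m. \<Sum>b<m. \<sigma> $$ (b,a) * \<tau> $$ (b,a)) \<le> (\<Sum>a<m. \<Sum>b<m. cmod (\<sigma> $$ (b,a) * \<tau> $$ (b,a)))"
    by (rule order_trans[OF norm_sum sum_mono]) (rule norm_sum)
  also have "\<dots> \<le> (\<Sum>a<m. \<Sum>b<m. (x b * y a + x a * y b) / 2)"
    using key by (intro sum_mono) auto
  also have "\<dots> = ((\<Sum>a<m. \<Sum>b<m. y a * x b) + (\<Sum>a<m. \<Sum>b<m. x a * y b)) / 2"
by (simp add: sum.distrib add_divide_distrib sum_divide_distrib[symmetric] mult.commute)
  also have "\<dots> = ((\<Sum>a<m. y a) * (\<Sum>b<m. x b) + (\<Sum>a<m. x a) * (\<Sum>b<m. y b)) / 2"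
    by (simp only: sum_product)
  also have "\<dots> = 1" using density_trace[OF S] density_trace[OF T] by (simp add: x_def y_def)
  finally show ?thesis .
qed



definition ee :: "nat \<Rightarrow> nat \<Rightarrow> real" where
  "ee d A = (if A mod d = A div d then 1 else 0)"
definition ww :: "nat \<Rightarrow> nat \<Rightarrow> nat \<Rightarrow> real" where
  "ww d p i = (if i < (d*d)^p then \<Prod>t<p. ee d (digit (d*d) t i) else 0)"
definition Hm :: "nat \<Rightarrow> nat \<Rightarrow> nat \<Rightarrow> complex mat" where
  "Hm d p N = mat N N (\<lambda>(i,j). complex_of_real (ww d p i * ww d p j / real d ^ p))"

lemma ee_idem: "ee d A * ee d A = ee d A" by (simp add: ee_def)
lemma ee_nonneg: "0 \<le> ee d A" by (simp add: ee_def)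
lemma ww_idem: "ww d p i * ww d p i = ww d p i"
  unfolding ww_def by (auto simp only: prod.distrib[symmetric] ee_idem split: if_split) 
lemma ww_nonneg: "0 \<le> ww d p i"
  by (simp add: ww_def ee_nonneg prod_nonneg)

lemma sum_ee: "0 < d \<Longrightarrow> (\<Sum>A<d*d. ee d A) = real d"
proof -
  assume d: "0 < d"
  have "(\<Sum>A<d*d. ee d A) = (\<Sum>j<d. \<Sum>a<d. ee d (a + d*j))" by (rule sum_split_lt)
  also have "\<dots> = (\<Sum>j<d. \<Sum>a<d. if a = j then 1 else 0)"
    by (intro sum.cong refl) (simp add: ee_def)
  also have "\<dots> = real d" by simp
  finally show ?thesis .
qed

lemma sum_restrict:
  fixes f :: "nat \<Rightarrow> 'a::comm_monoid_add"
  assumes "M \<le> N" "\<And>i. M \<le> i \<Longrightarrow> f i = 0"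
  shows "(\<Sum>i<N. f i) = (\<Sum>i<M. f i)"
  using assms by (intro sum.mono_neutral_right) auto

lemma sum_ww: "0 < d \<Longrightarrow> (d*d)^p \<le> N \<Longrightarrow> (\<Sum>i<N. ww d p i) = real d ^ p"
proof -
  assume d: "0 < d" and N: "(d*d)^p \<le> N"
  have "(\<Sum>i<N. ww d p i) = (\<Sum>i<(d*d)^p. ww d p i)"
    using N by (intro sum_restrict) (auto simp: ww_def)
  also have "\<dots> = (\<Sum>i<(d*d)^p. \<Prod>t<p. ee d (digit (d*d) t i))"
    by (intro sum.cong refl) (simp add: ww_def)
  also have "\<dots> = (\<Prod>t<p. \<Sum>A<d*d. ee d A)" by (rule prod_digits)
  also have "\<dots> = real d ^ p" using sum_ee[OF d] by simp
  finally show ?thesis .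
qed

lemma Hm_carrier: "Hm d p N \<in> carrier_mat N N" by (simp add: Hm_def)

lemma Hm_mult_vec:
  assumes v: "v \<in> carrier_vec N" and i: "i < N"
  shows "(Hm d p N *\<^sub>v v) $ i = complex_of_real (ww d p i / real d ^ p) * (\<Sum>j<N. complex_of_real (ww d p j) * v $ j)"
proof -
  have "(Hm d p N *\<^sub>v v) $ i = (\<Sum>j\<in>{0..<N}. complex_of_real (ww d p i * ww d p j / real d ^ p) * v $ j)"
    using v i by (simp add: Hm_def scalar_prod_def row_def)
  also have "\<dots> = (\<Sum>j<N. complex_of_real (ww d p i / real d ^ p) * (complex_of_real (ww d p j) * v $ j))"
    by (intro sum.cong) (auto simp: atLeast0LessThan)
  finally show ?thesis by (simp add: sum_distrib_left)
qed



definition sv :: "nat \<Rightarrow> nat \<Rightarrow> nat \<Rightarrow> complex vec \<Rightarrow> complex" where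
  "sv d p N v = (\<Sum>j<N. complex_of_real (ww d p j) * v $ j)"

lemma Hm_qform:
  assumes v: "v \<in> carrier_vec N"
  shows "(Hm d p N *\<^sub>v v) \<bullet>c v = complex_of_real ((cmod (sv d p N v))^2 / real d ^ p)"
proof -
  have "(Hm d p N *\<^sub>v v) \<bullet>c v = (\<Sum>i\<in>{0..<N}. (Hm d p N *\<^sub>v v) $ i * cnj (v $ i))"
    using v by (simp add: scalar_prod_def)
  also have "\<dots> = (\<Sum>i<N. complex_of_real (1 / real d ^ p) * sv d p N v * cnj (complex_of_real (ww d p i) * v $ i))"
    using v by (intro sum.cong) (auto simp: Hm_mult_vec sv_def atLeast0LessThan)
  also have "\<dots> = complex_of_real (1 / real d ^ p) * sv d p N v * cnj (sv d p N v)"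
    by (simp add: sum_distrib_left sv_def)
  also have "\<dots> = complex_of_real (1 / real d ^ p) * (sv d p N v * cnj (sv d p N v))"
    by (simp only: mult.assoc)
  also have "\<dots> = complex_of_real (1 / real d ^ p) * complex_of_real ((cmod (sv d p N v))^2)"
    by (simp only: complex_norm_square)
  also have "\<dots> = complex_of_real ((cmod (sv d p N v))^2 / real d ^ p)"
    by (simp only: of_real_mult[symmetric]) simp
  finally show ?thesis .
qed

lemma Hm_psd: "psd_mat N (Hm d p N)"
proof -
  have "hermitian_mat N (Hm d p N)"
    unfolding hermitian_mat_def by (auto simp: Hm_def mult.commute)
  moreover have "\<forall>v \<in> carrier_vec N. 0 \<le> Re ((Hm d p N *\<^sub>v v) \<bullet>c v)"
    by (auto simp only: Hm_qform Re_complex_of_real) simp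
  ultimately show ?thesis unfolding psd_mat_def by blast
qed

lemma cmod_Hm_entry:
  assumes v: "v \<in> carrier_vec N" and i: "i < N"
  shows "(cmod ((Hm d p N *\<^sub>v v) $ i))^2 = ww d p i * ((cmod (sv d p N v))^2 / (real d ^ p)^2)"
proof -
  have "(cmod ((Hm d p N *\<^sub>v v) $ i))^2 = (\<bar>ww d p i / real d ^ p\<bar> * cmod (sv d p N v))^2"
    using Hm_mult_vec[OF v i] by (simp only: sv_def norm_mult norm_of_real)
  also have "\<dots> = (ww d p i * ww d p i) * ((cmod (sv d p N v))^2 / (real d ^ p)^2)"
    using ww_nonneg[of d p i] by (simp add: power2_eq_square)
  finally show ?thesis by (simp only: ww_idem)
qed

lemma Hm_vnorm:
  assumes d: "0 < d" and N: "(d*d)^p \<le> N" and v: "v \<in> carrier_vec N"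
  shows "vnorm2 (Hm d p N *\<^sub>v v) = (cmod (sv d p N v))^2 / real d ^ p"
proof -
  have "vnorm2 (Hm d p N *\<^sub>v v) = (\<Sum>i<N. (cmod ((Hm d p N *\<^sub>v v) $ i))^2)"
    by (simp add: vnorm2_def Hm_def)
  also have "\<dots> = (\<Sum>i<N. ww d p i * ((cmod (sv d p N v))^2 / (real d ^ p)^2))"
    using v by (intro sum.cong refl) (simp add: cmod_Hm_entry)
  also have "\<dots> = real d ^ p * ((cmod (sv d p N v))^2 / (real d ^ p)^2)"
    by (simp only: sum_distrib_right[symmetric] sum_ww[OF d N])
  also have "\<dots> = (cmod (sv d p N v))^2 / real d ^ p"
    using d by (simp add: power2_eq_square)
  finally show ?thesis .
qed

lemma sv_bound:
  assumes d: "0 < d" and N: "(d*d)^p \<le> N" and v: "v \<in> carrier_vec N"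
  shows "(cmod (sv d p N v))^2 \<le> real d ^ p * vnorm2 v"
proof -
  have "cmod (sv d p N v) \<le> (\<Sum>j<N. ww d p j * cmod (v $ j))"
    unfolding sv_def
    by (rule order_trans[OF norm_sum], rule sum_mono) (simp add: norm_mult ww_nonneg)
  moreover have "0 \<le> cmod (sv d p N v)" by simp
  ultimately have "(cmod (sv d p N v))^2 \<le> (\<Sum>j<N. ww d p j * cmod (v $ j))^2"
    by (rule power_mono)
  also have "\<dots> \<le> (\<Sum>j<N. (ww d p j)^2) * (\<Sum>j<N. (cmod (v $ j))^2)"
    by (rule CS_real)
  also have "\<dots> = real d ^ p * vnorm2 v"
    using v by (simp add: power2_eq_square ww_idem sum_ww[OF d N] vnorm2_def)
  finally show ?thesis .
qed

lemma Hm_opnorm: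
  assumes d: "0 < d" and N: "(d*d)^p \<le> N"
  shows "opnorm_le1 N (Hm d p N)"
  unfolding opnorm_le1_def
proof (intro ballI)
  fix v :: "complex vec" assume v: "v \<in> carrier_vec N"
  have "vnorm2 (Hm d p N *\<^sub>v v) = (cmod (sv d p N v))^2 / real d ^ p" by (rule Hm_vnorm[OF d N v])
  also have "\<dots> \<le> (real d ^ p * vnorm2 v) / real d ^ p"
    using sv_bound[OF d N v] d by (intro divide_right_mono) auto
  also have "\<dots> = vnorm2 v" using d by simp
  finally show "vnorm2 (Hm d p N *\<^sub>v v) \<le> vnorm2 v" .
qed



lemma Hm_eig:
  assumes d: "0 < d" and N: "(d*d)^p \<le> N"
  shows "is_largest_eigenvalue (Hm d p N) 1"
  unfolding is_largest_eigenvalue_def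
proof (intro conjI allI impI)
  define u where "u = vec N (\<lambda>i. complex_of_real (ww d p i))"
  have uc: "u \<in> carrier_vec N" by (simp add: u_def)
  have su: "sv d p N u = complex_of_real (real d ^ p)"
  proof -
    have "sv d p N u = (\<Sum>j<N. complex_of_real (ww d p j))"
      unfolding sv_def by (intro sum.cong refl) (simp add: u_def ww_idem flip: of_real_mult)
    also have "\<dots> = complex_of_real (\<Sum>j<N. ww d p j)" by simp
    finally show ?thesis using sum_ww[OF d N] by simp
  qed
  have "Hm d p N *\<^sub>v u = 1 \<cdot>\<^sub>v u"
  proof (rule eq_vecI)
    fix i assume "i < dim_vec (1 \<cdot>\<^sub>v u)"
    then have i: "i < N" by (simp add: u_def)
    have "(Hm d p N *\<^sub>v u) $ i = complex_of_real (ww d p i / real d ^ p) * complex_of_real (real d ^ p)"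
      using Hm_mult_vec[OF uc i] su by (simp add: sv_def)
    also have "\<dots> = complex_of_real (ww d p i)" using d by (simp flip: of_real_mult)
    finally show "(Hm d p N *\<^sub>v u) $ i = (1 \<cdot>\<^sub>v u) $ i" using i by (simp add: u_def)
  qed (simp add: Hm_def u_def)
  moreover have "u \<noteq> 0\<^sub>v N"
  proof
    assume "u = 0\<^sub>v N"
    then have "sv d p N u = 0" by (simp add: sv_def)
    with su d show False by simp
  qed
  ultimately have "eigenvector (Hm d p N) u 1"
    unfolding eigenvector_def using uc by (simp add: Hm_def)
  then show "eigenvalue (Hm d p N) (complex_of_real 1)"
    unfolding eigenvalue_def by auto
next
  fix a assume "eigenvalue (Hm d p N) a"
  then obtain v where ev: "eigenvector (Hm d p N) v a" unfolding eigenvalue_def by blast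
  then have vc: "v \<in> carrier_vec N" and v0: "v \<noteq> 0\<^sub>v N" and Av: "Hm d p N *\<^sub>v v = a \<cdot>\<^sub>v v"
    unfolding eigenvector_def by (auto simp: Hm_def)
  obtain i where i: "i < N" "v $ i \<noteq> 0"
    using v0 vc by (metis carrier_vecD eq_vecI index_zero_vec(1) index_zero_vec(2))
  have pos: "0 < vnorm2 v"
  proof -
    have "0 < (cmod (v $ i))^2" using i by simp
    also have "\<dots> \<le> vnorm2 v"
      unfolding vnorm2_def using vc i by (intro member_le_sum) auto
    finally show ?thesis .
  qed
  have "vnorm2 (a \<cdot>\<^sub>v v) = (cmod a)^2 * vnorm2 v"
    unfolding vnorm2_def by (simp add: norm_mult power_mult_distrib sum_distrib_left)
  moreover have "vnorm2 (a \<cdot>\<^sub>v v) \<le> vnorm2 v"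
    using Hm_opnorm[OF d N] vc Av unfolding opnorm_le1_def by metis
  ultimately have "(cmod a)^2 \<le> 1" using pos
    by (metis mult_le_cancel_right2 not_less)
  then have "cmod a \<le> 1" by (simp add: power_le_one_iff abs_square_le_1)
  then show "Re a \<le> 1" using complex_Re_le_cmod[of a] by linarith
qed



lemma ham_eq:
  assumes M: "M \<in> carrier_mat (d^k) (d^k)"
  shows "hamiltonian k d k (\<lambda>_. M) = M"
proof -
  have ks: "k_subsets k k = {{..<k}}"
  proof
    show "k_subsets k k \<subseteq> {{..<k}}"
    proof
      fix S assume "S \<in> k_subsets k k"
      then have "S \<subseteq> {..<k}" "card S = card {..<k}" unfolding k_subsets_def by auto
      then have "S = {..<k}" by (intro card_subset_eq) auto
      then show "S \<in> {{..<k}}" by simp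
    qed
    show "{{..<k}} \<subseteq> k_subsets k k" unfolding k_subsets_def by auto
  qed
  have li: "local_index d {..<k} i = i" if "i < d^k" for i
  proof -
    have "local_index d {..<k} i = (\<Sum>t<k. digit d t i * d^t)"
      unfolding local_index_def by (intro sum.cong) (auto simp: lessThan_atLeast0)
    also have "\<dots> = i" using that by (simp add: digits_recon)
    finally show ?thesis .
  qed
  show ?thesis
    using M by (intro eq_matI) (auto simp: hamiltonian_def ks embed_local_def li)
qed

lemma prod_state_entry:
  fixes \<sigma> :: "nat \<Rightarrow> complex mat"
  assumes d: "0 < d" and pk: "2*p \<le> k" and i: "i < (d*d)^p" and j: "j < (d*d)^p"
  shows "(\<Prod>q<k. \<sigma> q $$ (digit d q j, digit d q i)) =
     (\<Prod>t<p. \<sigma> (2*t) $$ (digit (d*d) t j mod d, digit (d*d) t i mod d) *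
              \<sigma> (Suc (2*t)) $$ (digit (d*d) t j div d, digit (d*d) t i div d)) *
     (\<Prod>q\<in>{2*p..<k}. \<sigma> q $$ (0, 0))"
proof -
  have i': "i < d^(2*p)" and j': "j < d^(2*p)" using i j by (simp_all add: power_mult power2_eq_square)
  have U: "{..<k} = {..<2*p} \<union> {2*p..<k}" using pk by auto
  have "(\<Prod>q<k. \<sigma> q $$ (digit d q j, digit d q i)) =
      (\<Prod>q<2*p. \<sigma> q $$ (digit d q j, digit d q i)) * (\<Prod>q\<in>{2*p..<k}. \<sigma> q $$ (digit d q j, digit d q i))"
    by (subst U, rule prod.union_disjoint) auto
  also have "(\<Prod>q\<in>{2*p..<k}. \<sigma> q $$ (digit d q j, digit d q i)) = (\<Prod>q\<in>{2*p..<k}. \<sigma> q $$ (0, 0))"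
    using digit_big[OF d i'] digit_big[OF d j'] by (intro prod.cong) auto
  also have "(\<Prod>q<2*p. \<sigma> q $$ (digit d q j, digit d q i)) =
     (\<Prod>t<p. \<sigma> (2*t) $$ (digit (d*d) t j mod d, digit (d*d) t i mod d) *
              \<sigma> (Suc (2*t)) $$ (digit (d*d) t j div d, digit (d*d) t i div d))"
    by (simp only: prod_pairs digit_even[OF d] digit_odd[OF d])
  finally show ?thesis .
qed



lemma sum_diag:
  fixes F :: "nat \<Rightarrow> nat \<Rightarrow> complex"
  assumes d: "0 < d"
  shows "(\<Sum>A<d*d. complex_of_real (ee d A) * F (A mod d) (A div d)) = (\<Sum>a<d. F a a)"
proof -
  have "(\<Sum>A<d*d. complex_of_real (ee d A) * F (A mod d) (A div d))
      = (\<Sum>j<d. \<Sum>a<d. complex_of_real (ee d (a + d*j)) * F ((a + d*j) mod d) ((a + d*j) div d))"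
    by (rule sum_split_lt)
  also have "\<dots> = (\<Sum>j<d. \<Sum>a<d. if a = j then F j j else 0)"
    by (intro sum.cong refl) (auto simp: ee_def)
  also have "\<dots> = (\<Sum>a<d. F a a)" by simp
  finally show ?thesis .
qed

lemma Tpair:
  fixes X Y :: "complex mat"
  assumes d: "0 < d"
  shows "(\<Sum>A<d*d. \<Sum>B<d*d. complex_of_real (ee d A * ee d B) * X $$ (B mod d, A mod d) * Y $$ (B div d, A div d))
     = (\<Sum>a<d. \<Sum>b<d. X $$ (b,a) * Y $$ (b,a))"
proof -
  have "(\<Sum>A<d*d. \<Sum>B<d*d. complex_of_real (ee d A * ee d B) * X $$ (B mod d, A mod d) * Y $$ (B div d, A div d))
    = (\<Sum>A<d*d. complex_of_real (ee d A) * (\<Sum>B<d*d. complex_of_real (ee d B) * (X $$ (B mod d, A mod d) * Y $$ (B div d, A div d))))"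
    by (simp add: sum_distrib_left mult_ac)
  also have "\<dots> = (\<Sum>A<d*d. complex_of_real (ee d A) * (\<Sum>b<d. X $$ (b, A mod d) * Y $$ (b, A div d)))"
    using sum_diag[OF d, of "\<lambda>b b'. X $$ (b, _ mod d) * Y $$ (b', _ div d)"] by simp
  also have "\<dots> = (\<Sum>a<d. \<Sum>b<d. X $$ (b,a) * Y $$ (b,a))"
    by (rule sum_diag[OF d, of "\<lambda>a a'. \<Sum>b<d. X $$ (b, a) * Y $$ (b, a')"])
  finally show ?thesis .
qed



definition gg :: "(nat \<Rightarrow> complex mat) \<Rightarrow> nat \<Rightarrow> nat \<Rightarrow> nat \<Rightarrow> nat \<Rightarrow> complex" where
  "gg \<sigma> d t A B = complex_of_real (ee d A * ee d B) * \<sigma> (2*t) $$ (B mod d, A mod d) * \<sigma> (Suc (2*t)) $$ (B div d, A div d)"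

lemma trace_formula:
  fixes \<sigma> :: "nat \<Rightarrow> complex mat"
  assumes d: "0 < d" and pk: "2*p \<le> k"
  shows "mtrace (Hm d p (d^k) * product_state k d \<sigma>) =
     complex_of_real (1 / real d ^ p) * (\<Prod>q\<in>{2*p..<k}. \<sigma> q $$ (0, 0)) *
     (\<Prod>t<p. \<Sum>A<d*d. \<Sum>B<d*d. gg \<sigma> d t A B)"
proof -
  let ?N = "d^k" and ?M = "(d*d)^p"
  let ?Z = "\<Prod>q\<in>{2*p..<k}. \<sigma> q $$ (0, 0)"
  let ?c = "complex_of_real (1 / real d ^ p)"
  let ?F = "\<lambda>i j. complex_of_real (ww d p i * ww d p j / real d ^ p) * (\<Prod>q<k. \<sigma> q $$ (digit d q j, digit d q i))"
  have MN: "?M \<le> ?N"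
  proof -
    have "?M = d^(2*p)" by (simp add: power_mult power2_eq_square)
    also have "\<dots> \<le> d^k" using d pk by (simp add: power_increasing)
    finally show ?thesis .
  qed
  have "mtrace (Hm d p ?N * product_state k d \<sigma>) = (\<Sum>i<?N. \<Sum>j<?N. ?F i j)"
    unfolding mtrace_def
    by (intro sum.cong) (auto simp: Hm_def product_state_def scalar_prod_def row_def col_def atLeast0LessThan)
  also have "\<dots> = (\<Sum>i<?M. \<Sum>j<?M. ?F i j)"
  proof -
    have "(\<Sum>i<?N. \<Sum>j<?N. ?F i j) = (\<Sum>i<?M. \<Sum>j<?N. ?F i j)"
      using MN by (intro sum_restrict) (auto simp: ww_def)
    also have "\<dots> = (\<Sum>i<?M. \<Sum>j<?M. ?F i j)"
      using MN by (intro sum.cong refl sum_restrict) (auto simp: ww_def)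
    finally show ?thesis .
  qed
  also have "\<dots> = (\<Sum>i<?M. \<Sum>j<?M. ?c * ?Z * (\<Prod>t<p. gg \<sigma> d t (digit (d*d) t i) (digit (d*d) t j)))"
  proof (intro sum.cong refl)
    fix i j assume i: "i \<in> {..<?M}" and j: "j \<in> {..<?M}"
    have w: "complex_of_real (ww d p i * ww d p j / real d ^ p) =
       ?c * (\<Prod>t<p. complex_of_real (ee d (digit (d*d) t i) * ee d (digit (d*d) t j)))"
    proof -
      have "ww d p i * ww d p j / real d ^ p = (1 / real d ^ p) * (\<Prod>t<p. ee d (digit (d*d) t i) * ee d (digit (d*d) t j))"
        using i j by (simp add: ww_def prod.distrib)
      then show ?thesis by (simp only: of_real_mult of_real_prod)
    qed
    show "?F i j = ?c * ?Z * (\<Prod>t<p. gg \<sigma> d t (digit (d*d) t i) (digit (d*d) t j))"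
      using i j
      by (simp only: w prod_state_entry[OF d pk] lessThan_iff gg_def prod.distrib mult_ac)
  qed
  also have "\<dots> = ?c * ?Z * (\<Sum>i<?M. \<Sum>j<?M. \<Prod>t<p. gg \<sigma> d t (digit (d*d) t i) (digit (d*d) t j))"
    by (simp add: sum_distrib_left)
  also have "(\<Sum>i<?M. \<Sum>j<?M. \<Prod>t<p. gg \<sigma> d t (digit (d*d) t i) (digit (d*d) t j))
       = (\<Sum>i<?M. \<Prod>t<p. \<Sum>B<d*d. gg \<sigma> d t (digit (d*d) t i) B)"
    by (intro sum.cong refl) (rule prod_digits)
  also have "\<dots> = (\<Prod>t<p. \<Sum>A<d*d. \<Sum>B<d*d. gg \<sigma> d t A B)"
    by (rule prod_digits)
  finally show ?thesis .
qed



lemma MN_le: "0 < (d::nat) \<Longrightarrow> 2*p \<le> k \<Longrightarrow> (d*d)^p \<le> d^k"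
proof -
  assume d: "0 < d" and pk: "2*p \<le> k"
  have "(d*d)^p = d^(2*p)" by (induct p) (auto simp: mult.assoc)
  also have "\<dots> \<le> d^k" using d pk by (simp add: power_increasing)
  finally show ?thesis .
qed

lemma trace_bound:
  fixes \<sigma> :: "nat \<Rightarrow> complex mat"
  assumes d: "0 < d" and pk: "2*p \<le> k" and dens: "\<forall>q<k. density_mat d (\<sigma> q)"
  shows "Re (mtrace (Hm d p (d^k) * product_state k d \<sigma>)) \<le> 1 / real d ^ p"
proof -
  let ?Z = "\<Prod>q\<in>{2*p..<k}. \<sigma> q $$ (0, 0)"
  let ?P = "\<Prod>t<p. \<Sum>A<d*d. \<Sum>B<d*d. gg \<sigma> d t A B"
  have Z: "cmod ?Z \<le> 1"
  proof -
    have "cmod ?Z = (\<Prod>q\<in>{2*p..<k}. cmod (\<sigma> q $$ (0, 0)))" by (simp add: prod_norm)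
    also have "\<dots> \<le> 1" using density_diag_le1[OF _ d] dens by (intro prod_le_1) auto
    finally show ?thesis .
  qed
  have P: "cmod ?P \<le> 1"
  proof -
    have "cmod ?P = (\<Prod>t<p. cmod (\<Sum>A<d*d. \<Sum>B<d*d. gg \<sigma> d t A B))" by (simp add: prod_norm)
    also have "\<dots> \<le> 1"
    proof (intro prod_le_1 conjI)
      fix t assume t: "t \<in> {..<p}"
      have "(\<Sum>A<d*d. \<Sum>B<d*d. gg \<sigma> d t A B) = (\<Sum>a<d. \<Sum>b<d. \<sigma> (2*t) $$ (b,a) * \<sigma> (Suc (2*t)) $$ (b,a))"
        unfolding gg_def by (rule Tpair[OF d])
      moreover have "2*t < k" "Suc (2*t) < k" using t pk by auto
      ultimately show "cmod (\<Sum>A<d*d. \<Sum>B<d*d. gg \<sigma> d t A B) \<le> 1"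
        using pair_bound[OF dens[rule_format, OF \<open>2*t < k\<close>] dens[rule_format, OF \<open>Suc (2*t) < k\<close>]]
        by simp
    qed simp
    finally show ?thesis .
  qed
  have "Re (mtrace (Hm d p (d^k) * product_state k d \<sigma>)) \<le> cmod (mtrace (Hm d p (d^k) * product_state k d \<sigma>))"
    by (rule complex_Re_le_cmod)
  also have "\<dots> = (1 / real d ^ p) * cmod ?Z * cmod ?P"
    unfolding trace_formula[OF d pk] by (simp only: norm_mult norm_of_real) simp
  also have "\<dots> \<le> (1 / real d ^ p) * 1 * 1"
    using Z P by (intro mult_mono) auto
  finally show ?thesis by simp
qed

theorem mainTheorem8:
  fixes d k :: nat
  assumes "d \<ge> 2" and "k \<ge> 2"
  shows "\<exists>n h opt. valid_instance n d k h \<and>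
           is_largest_eigenvalue (hamiltonian n d k h) opt \<and> opt > 0 \<and>
           (\<forall>\<sigma>. (\<forall>q<n. density_mat d (\<sigma> q)) \<longrightarrow>
              Re (mtrace (hamiltonian n d k h * product_state n d \<sigma>))
                \<le> opt / real d ^ (k div 2))"
proof -
  let ?p = "k div 2"
  have d: "0 < d" using assms by simp
  have pk: "2 * ?p \<le> k" by simp
  have MN: "(d*d)^?p \<le> d^k" by (rule MN_le[OF d pk])
  have H: "hamiltonian k d k (\<lambda>_. Hm d ?p (d^k)) = Hm d ?p (d^k)"
    by (rule ham_eq) (rule Hm_carrier)
  show ?thesis
  proof (intro exI conjI allI impI)
    show "valid_instance k d k (\<lambda>_. Hm d ?p (d^k))"
      unfolding valid_instance_def by (simp add: Hm_psd Hm_opnorm[OF d MN])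
    show "is_largest_eigenvalue (hamiltonian k d k (\<lambda>_. Hm d ?p (d^k))) 1"
      unfolding H by (rule Hm_eig[OF d MN])
    show "(0::real) < 1" by simp
    fix \<sigma> :: "nat \<Rightarrow> complex mat"
    assume "\<forall>q<k. density_mat d (\<sigma> q)"
    then show "Re (mtrace (hamiltonian k d k (\<lambda>_. Hm d ?p (d^k)) * product_state k d \<sigma>)) \<le> 1 / real d ^ ?p"
      unfolding H by (rule trace_bound[OF d pk])
  qed
qed

end
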